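(* Let $K$ be a Poisson random variable and let $\mathbf A,\mathbf B$ be random $K\times d$ matrices whose rows are generated as follows: $(\mathbf a_1,\mathbf b_1),(\mathbf a_2,\mathbf b_2),\dots$ is an i.i.d. sequence of pairs of jointly distributed random vectors in $\mathbb R^d\times\mathbb R^d$, independent of $K$, and the $i$-th rows of $\mathbf A,\mathbf B$ are $\mathbf a_i^\top,\mathbf b_i^\top$ for $i\le K$. Then $$\mathbb E[\det(\mathbf A\mathbf B^\top)]=e^{-\mathbb E[K]}\det\big(\mathbf I+\mathbb E[\mathbf B^\top\mathbf A]\big).$$
   Context: $\mathbf A\mathbf B^\top$ is a $K\times K$ matrix; the determinant of a $0\times0$ matrix (when $K=0$) is $1$. All expectations involved are assumed finite. *)

theory Defs
  imports "HOL-Probability.Probability"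
begin

text \<open>Determinant of the n x n matrix with entries f i j (i, j < n), via the Leibniz formula.
  For n = 0 this is the empty product, i.e. 1.\<close>
definition det_nat :: "nat \<Rightarrow> (nat \<Rightarrow> nat \<Rightarrow> real) \<Rightarrow> real" where
  "det_nat n f = (\<Sum>p | p permutes {..<n}. of_int (sign p) * (\<Prod>i<n. f i (p i)))"

end

theory Submission
  imports Defs
begin


definition conjp :: "(nat \<Rightarrow> 'a) \<Rightarrow> nat \<Rightarrow> (nat \<Rightarrow> nat) \<Rightarrow> 'a \<Rightarrow> 'a" where
  "conjp f k p = (\<lambda>x. if x \<in> f ` {..<k} then f (p (inv_into {..<k} f x)) else x)"

lemma conjp_permutes:
  assumes inj: "inj_on f {..<k}" and p: "p permutes {..<k}"
  shows "conjp f k p permutes f ` {..<k}"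
proof -
  have bp: "bij_betw p {..<k} {..<k}" using p by (rule permutes_imp_bij)
  have "bij_betw (conjp f k p) (f ` {..<k}) (f ` {..<k})"
  proof -
    have "bij_betw (f \<circ> p \<circ> inv_into {..<k} f) (f ` {..<k}) (f ` {..<k})"
      by (intro bij_betw_trans[OF _ bij_betw_trans[OF bp]] bij_betw_inv_into inj_on_imp_bij_betw inj)
    then show ?thesis
      by (rule bij_betw_cong[THEN iffD1, rotated]) (auto simp: conjp_def)
  qed
  moreover have "\<And>x. x \<notin> f ` {..<k} \<Longrightarrow> conjp f k p x = x" by (simp add: conjp_def)
  ultimately show ?thesis by (rule bij_imp_permutes)
qed

lemma conjp_id: "conjp f k id = id"
  by (auto simp: conjp_def fun_eq_iff f_inv_into_f)

lemma conjp_transpose: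
  assumes inj: "inj_on f {..<k}" and p: "p permutes {..<k}" and ab: "a < k" "b < k"
  shows "conjp f k (Transposition.transpose a b \<circ> p) = Transposition.transpose (f a) (f b) \<circ> conjp f k p"
proof (rule ext)
  fix x
  show "conjp f k (Transposition.transpose a b \<circ> p) x = (Transposition.transpose (f a) (f b) \<circ> conjp f k p) x"
  proof (cases "x \<in> f ` {..<k}")
    case True
    then obtain i where i: "i < k" "x = f i" by auto
    have ii: "inv_into {..<k} f x = i" using i inj by (simp add: inv_into_f_f)
    have pi: "p i < k" using p i permutes_in_image by fastforce
    have "Transposition.transpose (f a) (f b) (f (p i)) = f (Transposition.transpose a b (p i))"
      using inj ab pi lessThan_iff by (auto simp: Transposition.transpose_def inj_on_eq_iff)
    then show ?thesis using True by (simp add: conjp_def ii)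
  next
    case False
    have "f a \<in> f ` {..<k}" "f b \<in> f ` {..<k}" using ab by auto
    then have "x \<noteq> f a" "x \<noteq> f b" using False by auto
    then show ?thesis using False by (simp add: conjp_def)
  qed
qed

lemma sign_conjp:
  assumes inj: "inj_on f {..<k}" and p: "p permutes {..<k}"
  shows "sign (conjp f k p) = sign p"
  using p finite_lessThan
proof (induction rule: permutes_induct)
  case id
  then show ?case using conjp_id[of f k, unfolded id_def] by simp
next
  case (swap a b p)
  have pp: "p permutes {..<k}" and ab: "a < k" "b < k" "a \<noteq> b" and IH: "sign (conjp f k p) = sign p"
    using swap by auto
  have fin: "finite (f ` {..<k})" by simp
  have q: "conjp f k p permutes f ` {..<k}" using conjp_permutes[OF inj pp] .
  have fab: "f a \<noteq> f b" using ab inj by (auto simp: inj_on_eq_iff)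
  have pq: "permutation (conjp f k p)" using permutes_imp_permutation[OF fin q] .
  have pp': "permutation p" using permutes_imp_permutation[OF finite_lessThan pp] .
  have "sign (conjp f k (Transposition.transpose a b \<circ> p)) = - sign (conjp f k p)"
    using fab pq by (simp add: conjp_transpose[OF inj pp ab(1,2)] sign_compose permutation_swap_id sign_swap_id)
  moreover have "sign (Transposition.transpose a b \<circ> p) = - sign p"
    using ab pp' by (simp add: sign_compose permutation_swap_id sign_swap_id)
  ultimately show ?case using IH by linarith
qed

definition unconjp :: "(nat \<Rightarrow> 'a) \<Rightarrow> nat \<Rightarrow> ('a \<Rightarrow> 'a) \<Rightarrow> nat \<Rightarrow> nat" where
  "unconjp f k q = (\<lambda>i. if i < k then inv_into {..<k} f (q (f i)) else i)"

lemma unconjp_permutes: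
  assumes inj: "inj_on f {..<k}" and q: "q permutes f ` {..<k}"
  shows "unconjp f k q permutes {..<k}"
proof -
  have bq: "bij_betw q (f ` {..<k}) (f ` {..<k})" using q by (rule permutes_imp_bij)
  have bf: "bij_betw f {..<k} (f ` {..<k})" using inj by (rule inj_on_imp_bij_betw)
  have bi: "bij_betw (inv_into {..<k} f) (f ` {..<k}) {..<k}" using bf by (rule bij_betw_inv_into)
  have "bij_betw ((inv_into {..<k} f \<circ> q) \<circ> f) {..<k} {..<k}"
    by (rule bij_betw_trans[OF bf bij_betw_trans[OF bq bi]])
  then have "bij_betw (unconjp f k q) {..<k} {..<k}"
    by (rule bij_betw_cong[THEN iffD1, rotated]) (auto simp: unconjp_def)
  moreover have "\<And>x. x \<notin> {..<k} \<Longrightarrow> unconjp f k q x = x" by (simp add: unconjp_def)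
  ultimately show ?thesis by (rule bij_imp_permutes)
qed

lemma conjp_unconjp:
  assumes inj: "inj_on f {..<k}" and q: "q permutes f ` {..<k}"
  shows "conjp f k (unconjp f k q) = q"
proof (rule ext)
  fix x show "conjp f k (unconjp f k q) x = q x"
  proof (cases "x \<in> f ` {..<k}")
    case True
    then obtain i where i: "i < k" "x = f i" by auto
    have "q x \<in> f ` {..<k}" using q True permutes_in_image by fastforce
    then show ?thesis using i inj by (simp add: conjp_def unconjp_def f_inv_into_f)
  next
    case False
    then show ?thesis using q by (simp add: conjp_def permutes_not_in)
  qed
qed

lemma unconjp_conjp:
  assumes inj: "inj_on f {..<k}" and p: "p permutes {..<k}"
  shows "unconjp f k (conjp f k p) = p"
proof (rule ext)
  fix i show "unconjp f k (conjp f k p) i = p i"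
  proof (cases "i < k")
    case True
    have "p i < k" using p True permutes_in_image by fastforce
    then show ?thesis using True inj by (simp add: conjp_def unconjp_def)
  next
    case False
    then show ?thesis using p by (simp add: unconjp_def permutes_not_in)
  qed
qed

lemma prod_conjp:
  assumes inj: "inj_on f {..<k}"
  shows "(\<Prod>i<k. C (f i) (f (p i))) = (\<Prod>j\<in>f ` {..<k}. C j (conjp f k p j))"
  using inj by (simp add: prod.reindex conjp_def)

definition dsub :: "('d \<Rightarrow> 'd \<Rightarrow> real) \<Rightarrow> 'd set \<Rightarrow> real" where
  "dsub C T = (\<Sum>q | q permutes T. of_int (sign q) * (\<Prod>j\<in>T. C j (q j)))"

lemma sum_conjp:
  fixes f :: "nat \<Rightarrow> 'a" and k :: nat
  assumes inj: "inj_on f {..<k}"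
  shows "(\<Sum>p | p permutes {..<k}. of_int (sign p) * (\<Prod>i<k. C (f i) (f (p i)))) = dsub C (f ` {..<k})"
proof -
  let ?g = "\<lambda>q. of_int (sign q) * (\<Prod>j\<in>f ` {..<k}. C j (q j)) :: real"
  have bij: "bij_betw (conjp f k) {p. p permutes {..<k}} {q. q permutes f ` {..<k}}"
    by (rule bij_betw_byWitness[of _ "unconjp f k"])
       (auto simp: unconjp_conjp[OF inj] conjp_unconjp[OF inj] conjp_permutes[OF inj] unconjp_permutes[OF inj])
  have "(\<Sum>p | p permutes {..<k}. of_int (sign p) * (\<Prod>i<k. C (f i) (f (p i)))) =
        (\<Sum>p | p permutes {..<k}. ?g (conjp f k p))"
  proof (rule sum.cong[OF refl])
    fix p assume p: "p \<in> {p. p permutes {..<k}}"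
    have "(\<Prod>i<k. C (f i) (f (p i))) = (\<Prod>j\<in>f ` {..<k}. C j (conjp f k p j))"
      by (rule prod_conjp[OF inj])
    then show "of_int (sign p) * (\<Prod>i<k. C (f i) (f (p i))) = ?g (conjp f k p)"
      using p sign_conjp[OF inj] by simp
  qed
  also have "\<dots> = (\<Sum>q | q permutes f ` {..<k}. ?g q)"
    by (rule sum.reindex_bij_betw[OF bij])
  finally show ?thesis by (simp only: dsub_def)
qed

lemma sum_noninj:
  fixes k :: nat
  assumes ninj: "\<not> inj_on f {..<k}"
  shows "(\<Sum>p | p permutes {..<k}. of_int (sign p) * (\<Prod>i<k. C (f i) (f (p i)))) = (0::real)"
proof -
  obtain i1 i2 where i: "i1 < k" "i2 < k" "i1 \<noteq> i2" "f i1 = f i2"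
    using ninj unfolding inj_on_def by auto
  define t where "t = Transposition.transpose i1 i2"
  have t: "t permutes {..<k}" using i unfolding t_def by (simp add: permutes_swap_id)
  have ft: "\<And>i. f (t i) = f i" using i by (simp add: t_def Transposition.transpose_def)
  have tt: "\<And>i. t (t i) = i" by (simp add: t_def)
  define S where "S = (\<Sum>p | p permutes {..<k}. of_int (sign p) * (\<Prod>i<k. C (f i) (f (p i))) :: real)"
  have "S = (\<Sum>p | p permutes {..<k}. of_int (sign (p \<circ> t)) * (\<Prod>i<k. C (f i) (f ((p \<circ> t) i))))"
    unfolding S_def by (rule sum_permutations_compose_right[OF t])
  also have "\<dots> = (\<Sum>p | p permutes {..<k}. - (of_int (sign p) * (\<Prod>i<k. C (f i) (f (p i)))))"
  proof (rule sum.cong[OF refl])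
    fix p assume p: "p \<in> {p. p permutes {..<k}}"
    have "p permutes {..<k}" using p by simp
    then have pp: "permutation p" using permutes_imp_permutation[OF finite_lessThan] by blast
    have pt: "permutation t" using t permutes_imp_permutation[OF finite_lessThan] by blast
    have st: "sign t = -1" using i by (simp add: t_def sign_swap_id)
    have "(\<Prod>i<k. C (f i) (f ((p \<circ> t) i))) = prod ((\<lambda>i. C (f i) (f ((p \<circ> t) i))) \<circ> t) {..<k}"
      by (rule prod.permute[OF t])
    also have "\<dots> = (\<Prod>i<k. C (f i) (f (p i)))" by (simp add: comp_def ft tt)
    finally show "of_int (sign (p \<circ> t)) * (\<Prod>i<k. C (f i) (f ((p \<circ> t) i))) =
        - (of_int (sign p) * (\<Prod>i<k. C (f i) (f (p i))))"
      using pp pt st by (simp add: sign_compose)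
  qed
  also have "\<dots> = - S" unfolding S_def by (simp add: sum_negf)
  finally show ?thesis unfolding S_def by simp
qed

lemma card_inj_funcset_fact:
  assumes "finite T" "card T = k"
  shows "card {f \<in> {..<k} \<rightarrow>\<^sub>E T. inj_on f {..<k}} = fact k"
  using card_inj_on_subset_funcset[of "{..<k}" T "{..<k}"] assms
  by (simp add: fact_prod_rev atLeast0LessThan)

lemma inj_image_set_eq:
  fixes T :: "'d::finite set" and k :: nat
  assumes "card T = k"
  shows "{f \<in> {f \<in> {..<k} \<rightarrow>\<^sub>E (UNIV::'d set). inj_on f {..<k}}. f ` {..<k} = T}
       = {f \<in> {..<k} \<rightarrow>\<^sub>E T. inj_on f {..<k}}"
proof (intro equalityI subsetI)
  fix f assume "f \<in> {f \<in> {f \<in> {..<k} \<rightarrow>\<^sub>E (UNIV::'d set). inj_on f {..<k}}. f ` {..<k} = T}"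
  then show "f \<in> {f \<in> {..<k} \<rightarrow>\<^sub>E T. inj_on f {..<k}}" by (auto simp: PiE_iff)
next
  fix f assume f: "f \<in> {f \<in> {..<k} \<rightarrow>\<^sub>E T. inj_on f {..<k}}"
  then have sub: "f ` {..<k} \<subseteq> T" and inj: "inj_on f {..<k}" by (auto simp: PiE_iff)
  have "card (f ` {..<k}) = card T" using inj assms by (simp add: card_image)
  then have "f ` {..<k} = T" using sub by (intro card_subset_eq) auto
  then show "f \<in> {f \<in> {f \<in> {..<k} \<rightarrow>\<^sub>E (UNIV::'d set). inj_on f {..<k}}. f ` {..<k} = T}"
    using f inj by (auto simp: PiE_iff)
qed

lemma Gk:
  fixes C :: "'d::finite \<Rightarrow> 'd \<Rightarrow> real" and k :: nat
  shows "(\<Sum>f \<in> {..<k} \<rightarrow>\<^sub>E (UNIV::'d set). \<Sum>p | p permutes {..<k}. of_int (sign p) * (\<Prod>i<k. C (f i) (f (p i))))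
       = fact k * (\<Sum>T | card T = k. dsub C T)"
proof -
  let ?F = "{f \<in> {..<k} \<rightarrow>\<^sub>E (UNIV::'d set). inj_on f {..<k}}"
  have fin: "finite ({..<k} \<rightarrow>\<^sub>E (UNIV::'d set))" by (simp add: finite_PiE)
  have "(\<Sum>f \<in> {..<k} \<rightarrow>\<^sub>E (UNIV::'d set). \<Sum>p | p permutes {..<k}. of_int (sign p) * (\<Prod>i<k. C (f i) (f (p i))))
      = (\<Sum>f \<in> ?F. \<Sum>p | p permutes {..<k}. of_int (sign p) * (\<Prod>i<k. C (f i) (f (p i))))"
    by (rule sum.mono_neutral_right[OF fin]) (auto simp: sum_noninj)
  also have "\<dots> = (\<Sum>f \<in> ?F. dsub C (f ` {..<k}))"
    by (rule sum.cong) (auto simp: sum_conjp)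
  also have "\<dots> = (\<Sum>T | card T = k. \<Sum>f \<in> {f \<in> ?F. f ` {..<k} = T}. dsub C (f ` {..<k}))"
  proof -
    have finF: "finite ?F" by (rule finite_subset[OF _ fin]) blast
    have img: "(\<lambda>f. f ` {..<k}) ` ?F \<subseteq> {T. card T = k}"
    proof (rule image_subsetI)
      fix f assume "f \<in> ?F"
      then have "inj_on f {..<k}" by blast
      then show "f ` {..<k} \<in> {T. card T = k}" by (simp add: card_image)
    qed
    show ?thesis by (rule sum.group[OF finF _ img, symmetric]) simp
  qed
  also have "\<dots> = (\<Sum>T | card T = k. fact k * dsub C T)"
  proof (rule sum.cong[OF refl])
    fix T :: "'d set" assume "T \<in> {T. card T = k}"
    then have cT: "card T = k" by simp
    have "(\<Sum>f \<in> {f \<in> ?F. f ` {..<k} = T}. dsub C (f ` {..<k})) = (\<Sum>f \<in> {f \<in> ?F. f ` {..<k} = T}. dsub C T)"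
      by (rule sum.cong) auto
    also have "\<dots> = of_nat (card {f \<in> ?F. f ` {..<k} = T}) * dsub C T" by simp
    also have "card {f \<in> ?F. f ` {..<k} = T} = fact k"
      using inj_image_set_eq[OF cT] card_inj_funcset_fact[OF _ cT] by simp
    finally show "(\<Sum>f \<in> {f \<in> ?F. f ` {..<k} = T}. dsub C (f ` {..<k})) = fact k * dsub C T" by simp
  qed
  also have "\<dots> = fact k * (\<Sum>T | card T = k. dsub C T)" by (simp add: sum_distrib_left)
  finally show ?thesis .
qed

lemma prod_delta_fix:
  fixes p :: "'n::finite \<Rightarrow> 'n"
  shows "(\<Prod>i\<in>B. (if i = p i then 1 else 0) :: real) = (if \<forall>i\<in>B. p i = i then 1 else 0)"
proof (cases "\<forall>i\<in>B. p i = i")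
  case True then show ?thesis by (auto intro!: prod.neutral)
next
  case False
  then obtain i where "i \<in> B" "p i \<noteq> i" by auto
  then have "(\<Prod>i\<in>B. (if i = p i then 1 else 0) :: real) = 0"
    by (intro prod_zero) (auto intro!: bexI[of _ i])
  then show ?thesis using False by simp
qed

lemma det_I_plus:
  fixes A :: "real^'n^'n"
  shows "det (mat 1 + A) = (\<Sum>T\<in>Pow UNIV. dsub (\<lambda>i j. A$i$j) T)"
proof -
  have "det (mat 1 + A) = (\<Sum>p | p permutes UNIV. of_int (sign p) *
           (\<Prod>i\<in>UNIV. A$i$(p i) + (if i = p i then 1 else 0)))"
    unfolding det_def by (simp add: mat_def add.commute)
  also have "\<dots> = (\<Sum>p | p permutes UNIV. \<Sum>X\<in>Pow UNIV. of_int (sign p) *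
           ((\<Prod>i\<in>X. A$i$(p i)) * (\<Prod>i\<in>UNIV - X. (if i = p i then 1 else 0))))"
    by (simp add: prod_add sum_distrib_left)
  also have "\<dots> = (\<Sum>X\<in>Pow UNIV. \<Sum>p | p permutes UNIV. of_int (sign p) *
           ((\<Prod>i\<in>X. A$i$(p i)) * (\<Prod>i\<in>UNIV - X. (if i = p i then 1 else 0))))"
    by (rule sum.swap)
  also have "\<dots> = (\<Sum>X\<in>Pow UNIV. dsub (\<lambda>i j. A$i$j) X)"
  proof (rule sum.cong[OF refl])
    fix X :: "'n set" assume "X \<in> Pow UNIV"
    have "(\<Sum>p | p permutes UNIV. of_int (sign p) *
           ((\<Prod>i\<in>X. A$i$(p i)) * (\<Prod>i\<in>UNIV - X. (if i = p i then 1 else 0))))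
        = (\<Sum>p \<in> {p. p permutes UNIV}. if (\<forall>i\<in>UNIV - X. p i = i) then of_int (sign p) * (\<Prod>i\<in>X. A$i$(p i)) else 0)"
      by (rule sum.cong[OF refl]) (simp add: prod_delta_fix)
    also have "\<dots> = (\<Sum>p \<in> {p \<in> {p. p permutes UNIV}. \<forall>i\<in>UNIV - X. p i = i}. of_int (sign p) * (\<Prod>i\<in>X. A$i$(p i)))"
      by (rule sum.inter_filter[symmetric]) simp
    also have "{p \<in> {p. p permutes UNIV}. \<forall>i\<in>UNIV - X. p i = i} = {p. p permutes X}"
      by (auto simp: permutes_def)
    finally show "(\<Sum>p | p permutes UNIV. of_int (sign p) *
           ((\<Prod>i\<in>X. A$i$(p i)) * (\<Prod>i\<in>UNIV - X. (if i = p i then 1 else 0)))) = dsub (\<lambda>i j. A$i$j) X"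
      by (simp add: dsub_def)
  qed
  finally show ?thesis .
qed

lemma dsub_scale:
  fixes T :: "'d::finite set"
  shows "dsub (\<lambda>i j. r * C i j) T = r ^ card T * dsub C T"
  by (simp add: dsub_def prod.distrib sum_distrib_left mult.left_commute)

lemma series_det:
  fixes C :: "'d::finite \<Rightarrow> 'd \<Rightarrow> real"
  shows "(\<lambda>k. r ^ k / fact k * (\<Sum>f \<in> {..<k} \<rightarrow>\<^sub>E (UNIV::'d set). \<Sum>p | p permutes {..<k}. of_int (sign p) * (\<Prod>i<k. C (f i) (f (p i)))))
     sums det (mat 1 + (\<chi> i j. r * C i j) :: real^'d^'d)"
proof -
  have eq: "r ^ k / fact k * (\<Sum>f \<in> {..<k} \<rightarrow>\<^sub>E (UNIV::'d set). \<Sum>p | p permutes {..<k}. of_int (sign p) * (\<Prod>i<k. C (f i) (f (p i))))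
      = (\<Sum>T | card T = k. dsub (\<lambda>i j. r * C i j) T)" for k
    by (simp add: Gk dsub_scale sum_distrib_left)
  have z: "(\<Sum>T | card T = k. dsub (\<lambda>i j. r * C i j) (T::'d set)) = 0" if "k \<notin> {..CARD('d)}" for k
  proof -
    have "{T::'d set. card T = k} = {}"
      using that card_mono[of "UNIV::'d set"] by fastforce
    then show ?thesis by simp
  qed
  have "(\<lambda>k. \<Sum>T | card T = k. dsub (\<lambda>i j. r * C i j) (T::'d set)) sums
        (\<Sum>k\<in>{..CARD('d)}. \<Sum>T | card T = k. dsub (\<lambda>i j. r * C i j) (T::'d set))"
    by (rule sums_finite) (use z in auto)
  also have "(\<Sum>k\<in>{..CARD('d)}. \<Sum>T | card T = k. dsub (\<lambda>i j. r * C i j) (T::'d set))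
      = (\<Sum>T\<in>Pow UNIV. dsub (\<lambda>i j. r * C i j) (T::'d set))"
  proof -
    have "(\<Sum>k\<in>{..CARD('d)}. \<Sum>T \<in> {T \<in> Pow UNIV. card T = k}. dsub (\<lambda>i j. r * C i j) (T::'d set))
      = (\<Sum>T\<in>Pow UNIV. dsub (\<lambda>i j. r * C i j) (T::'d set))"
      by (rule sum.group) (auto simp: card_mono)
    then show ?thesis by simp
  qed
  also have "\<dots> = det (mat 1 + (\<chi> i j. r * C i j) :: real^'d^'d)"
    by (simp add: det_I_plus)
  finally have X: "(\<lambda>k. \<Sum>T | card T = k. dsub (\<lambda>i j. r * C i j) (T::'d set)) sums det (mat 1 + (\<chi> i j. r * C i j) :: real^'d^'d)" .
  show ?thesis unfolding eq by (rule X)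
qed




context prob_space
begin

lemma sums_decomp:
  fixes K :: "'a \<Rightarrow> nat" and F :: "nat \<Rightarrow> 'a \<Rightarrow> real"
  assumes K: "K \<in> measurable M (count_space UNIV)" and F: "\<And>k. F k \<in> borel_measurable M"
    and int: "integrable M (\<lambda>\<omega>. F (K \<omega>) \<omega>)"
  shows "(\<lambda>k. expectation (\<lambda>\<omega>. indicator {\<omega>\<in>space M. K \<omega> = k} \<omega> * F k \<omega>)) sums expectation (\<lambda>\<omega>. F (K \<omega>) \<omega>)"
proof -
  define s where "s n \<omega> = (\<Sum>k<n. indicator {\<omega>\<in>space M. K \<omega> = k} \<omega> * F k \<omega>)" for n \<omega>
  have sets: "{\<omega>\<in>space M. K \<omega> = k} \<in> sets M" for k
    using K by measurable
  have intk: "integrable M (\<lambda>\<omega>. indicator {\<omega>\<in>space M. K \<omega> = k} \<omega> * F k \<omega>)" for k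
  proof -
    have "integrable M (\<lambda>\<omega>. indicator {\<omega>\<in>space M. K \<omega> = k} \<omega> *\<^sub>R F (K \<omega>) \<omega>)"
      by (rule integrable_mult_indicator[OF sets int])
    moreover have "(\<lambda>\<omega>. indicator {\<omega>\<in>space M. K \<omega> = k} \<omega> *\<^sub>R F (K \<omega>) \<omega>) =
       (\<lambda>\<omega>. indicator {\<omega>\<in>space M. K \<omega> = k} \<omega> * F k \<omega>)"
      by (auto simp: indicator_def fun_eq_iff)
    ultimately show ?thesis by simp
  qed
  have s_eq: "s n \<omega> = (if K \<omega> < n then F (K \<omega>) \<omega> else 0)" if "\<omega> \<in> space M" for n \<omega>
  proof -
    have "s n \<omega> = (\<Sum>k<n. if K \<omega> = k then F k \<omega> else 0)"
      unfolding s_def using that by (intro sum.cong) (auto simp: indicator_def)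
    also have "\<dots> = (if K \<omega> < n then F (K \<omega>) \<omega> else 0)"
      by (simp add: sum.delta)
    finally show ?thesis .
  qed
  have meas: "(\<lambda>\<omega>. F (K \<omega>) \<omega>) \<in> borel_measurable M" using int by (rule borel_measurable_integrable)
  have smeas: "s n \<in> borel_measurable M" for n
    unfolding s_def using sets F by measurable
  have lim: "AE \<omega> in M. (\<lambda>n. s n \<omega>) \<longlonglongrightarrow> F (K \<omega>) \<omega>"
  proof (rule AE_I2)
    fix \<omega> assume \<omega>: "\<omega> \<in> space M"
    have "eventually (\<lambda>n. s n \<omega> = F (K \<omega>) \<omega>) sequentially"
      unfolding eventually_sequentially using \<omega> by (intro exI[of _ "Suc (K \<omega>)"]) (auto simp: s_eq)
    then show "(\<lambda>n. s n \<omega>) \<longlonglongrightarrow> F (K \<omega>) \<omega>" by (rule tendsto_eventually)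
  qed
  have bound: "AE \<omega> in M. norm (s n \<omega>) \<le> \<bar>F (K \<omega>) \<omega>\<bar>" for n
    by (rule AE_I2) (simp add: s_eq)
  have "(\<lambda>n. integral\<^sup>L M (s n)) \<longlonglongrightarrow> expectation (\<lambda>\<omega>. F (K \<omega>) \<omega>)"
    by (rule integral_dominated_convergence[OF meas smeas integrable_abs[OF int] lim bound])
  moreover have "integral\<^sup>L M (s n) = (\<Sum>k<n. expectation (\<lambda>\<omega>. indicator {\<omega>\<in>space M. K \<omega> = k} \<omega> * F k \<omega>))" for n
    unfolding s_def using Bochner_Integration.integral_sum[where I="{..<n}" and f="\<lambda>k \<omega>. indicator {\<omega>\<in>space M. K \<omega> = k} \<omega> * F k \<omega>"] intk
    by simp
  ultimately show ?thesis unfolding sums_def by simp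
qed

lemma indep_var_KS:
  fixes K :: "'a \<Rightarrow> nat" and S :: "'a \<Rightarrow> 'b" and h :: "'b \<Rightarrow> real"
  assumes ind: "indep_set (sets (vimage_algebra (space M) K (count_space UNIV))) (sets (vimage_algebra (space M) S N))"
    and Km: "K \<in> measurable M (count_space UNIV)" and Sm: "S \<in> measurable M N"
    and h: "h \<in> borel_measurable N"
  shows "indep_var borel (\<lambda>\<omega>. indicator {k} (K \<omega>) :: real) borel (\<lambda>\<omega>. h (S \<omega>))"
proof -
  let ?X1 = "\<lambda>\<omega>. indicator {k} (K \<omega>) :: real"
  let ?X2 = "\<lambda>\<omega>. h (S \<omega>)"
  have sets: "{\<omega>\<in>space M. K \<omega> = k} \<in> sets M" using Km by measurable
  have g1: "{?X1 -` A \<inter> space M | A. A \<in> sets borel} \<subseteq> {K -` A \<inter> space M | A. A \<in> sets (count_space UNIV)}"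
  proof
    fix x assume "x \<in> {?X1 -` A \<inter> space M | A. A \<in> sets borel}"
    then obtain A where "x = ?X1 -` A \<inter> space M" by blast
    then have "x = K -` {n. indicator {k} n \<in> A} \<inter> space M" by auto
    then show "x \<in> {K -` A \<inter> space M | A. A \<in> sets (count_space UNIV)}"
      by (intro CollectI exI[of _ "{n. indicator {k} n \<in> A}"]) simp
  qed
  have g2: "{?X2 -` A \<inter> space M | A. A \<in> sets borel} \<subseteq> {S -` A \<inter> space M | A. A \<in> sets N}"
  proof
    fix x assume "x \<in> {?X2 -` A \<inter> space M | A. A \<in> sets borel}"
    then obtain A where A: "A \<in> sets borel" "x = ?X2 -` A \<inter> space M" by blast
    then have "x = S -` (h -` A \<inter> space N) \<inter> space M" using Sm by (auto simp: measurable_def)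
    moreover have "h -` A \<inter> space N \<in> sets N" using h A(1) by (rule measurable_sets)
    ultimately show "x \<in> {S -` A \<inter> space M | A. A \<in> sets N}" by blast
  qed
  show "indep_var borel ?X1 borel ?X2"
    unfolding indep_var_eq
  proof (intro conjI)
    show "random_variable borel ?X1" by (rule measurable_compose[OF Km]) simp
    show "random_variable borel ?X2" using Sm h by measurable
    show "indep_set (sigma_sets (space M) {?X1 -` A \<inter> space M | A. A \<in> sets borel})
                    (sigma_sets (space M) {?X2 -` A \<inter> space M | A. A \<in> sets borel})"
      unfolding indep_set_def
    proof (rule indep_sets_mono_sets[OF ind[unfolded indep_set_def]])
      have s1: "sigma_sets (space M) {?X1 -` A \<inter> space M | A. A \<in> sets borel} \<subseteq> sets (vimage_algebra (space M) K (count_space UNIV))"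
        unfolding sets_vimage_algebra by (rule sigma_sets_mono'[OF g1])
      have s2: "sigma_sets (space M) {?X2 -` A \<inter> space M | A. A \<in> sets borel} \<subseteq> sets (vimage_algebra (space M) S N)"
        unfolding sets_vimage_algebra by (rule sigma_sets_mono'[OF g2])
      fix i :: bool assume "i \<in> UNIV"
      show "case_bool (sigma_sets (space M) {?X1 -` A \<inter> space M | A. A \<in> sets borel})
                      (sigma_sets (space M) {?X2 -` A \<inter> space M | A. A \<in> sets borel}) i
            \<subseteq> case_bool (sets (vimage_algebra (space M) K (count_space UNIV))) (sets (vimage_algebra (space M) S N)) i"
        using s1 s2 by (cases i) simp_all
    qed
  qed
qed

lemma indep_mult:
  fixes K :: "'a \<Rightarrow> nat" and S :: "'a \<Rightarrow> 'b" and h :: "'b \<Rightarrow> real"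
  assumes ind: "indep_set (sets (vimage_algebra (space M) K (count_space UNIV))) (sets (vimage_algebra (space M) S N))"
    and Km: "K \<in> measurable M (count_space UNIV)" and Sm: "S \<in> measurable M N"
    and h: "h \<in> borel_measurable N"
    and int: "integrable M (\<lambda>\<omega>. h (S \<omega>))"
  shows "expectation (\<lambda>\<omega>. indicator {\<omega>\<in>space M. K \<omega> = k} \<omega> * h (S \<omega>))
       = prob {\<omega>\<in>space M. K \<omega> = k} * expectation (\<lambda>\<omega>. h (S \<omega>))"
proof -
  let ?X1 = "\<lambda>\<omega>. indicator {k} (K \<omega>) :: real"
  let ?X2 = "\<lambda>\<omega>. h (S \<omega>)"
  have sets: "{\<omega>\<in>space M. K \<omega> = k} \<in> sets M" using Km by measurable
  have i2: "indep_var borel ?X1 borel ?X2" by (rule indep_var_KS[OF ind Km Sm h])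
  have ind_eq: "\<And>\<omega>. \<omega> \<in> space M \<Longrightarrow> indicator {k} (K \<omega>) = (indicator {\<omega>\<in>space M. K \<omega> = k} \<omega> :: real)"
    by (simp add: indicator_def)
  have int1: "integrable M (\<lambda>\<omega>. indicator {\<omega>\<in>space M. K \<omega> = k} \<omega> :: real)"
    using sets by (simp add: integrable_indicator_iff less_top[symmetric])
  have "K -` {k} \<inter> space M \<in> sets M" using Km by (rule measurable_sets) simp
  then have "integrable M (indicator (K -` {k}) :: 'a \<Rightarrow> real)" by (simp add: integrable_indicator_iff less_top[symmetric])
  moreover have "(indicator (K -` {k}) :: 'a \<Rightarrow> real) = ?X1" by (auto simp: indicator_def fun_eq_iff)
  ultimately have int1': "integrable M ?X1" by simp
  have "expectation (\<lambda>\<omega>. indicator {\<omega>\<in>space M. K \<omega> = k} \<omega> * h (S \<omega>))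
      = expectation (\<lambda>\<omega>. ?X1 \<omega> * ?X2 \<omega>)"
    by (rule Bochner_Integration.integral_cong) (auto simp: ind_eq)
  also have "\<dots> = expectation ?X1 * expectation ?X2"
    by (rule indep_var_lebesgue_integral[OF i2 int1' int])
  also have "expectation ?X1 = expectation (\<lambda>\<omega>. indicator {\<omega>\<in>space M. K \<omega> = k} \<omega> :: real)"
    by (rule Bochner_Integration.integral_cong) (auto simp: ind_eq)
  also have "\<dots> = prob {\<omega>\<in>space M. K \<omega> = k}" using sets by simp
  finally show ?thesis .
qed

end




locale lem6 = prob_space M for M :: "'w measure" +
  fixes K :: "'w \<Rightarrow> nat" and rate :: real and a b :: "nat \<Rightarrow> 'w \<Rightarrow> real ^ 'd"
  assumes rate: "rate > 0"
    and Km: "K \<in> measurable M (count_space UNIV)"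
    and Kd: "distr M (count_space UNIV) K = measure_pmf (poisson_pmf rate)"
    and Xm: "\<And>i. (\<lambda>\<omega>. (a i \<omega>, b i \<omega>)) \<in> borel_measurable M"
    and indX: "indep_vars (\<lambda>_. borel) (\<lambda>i \<omega>. (a i \<omega>, b i \<omega>)) UNIV"
    and idd: "\<And>i. distr M borel (\<lambda>\<omega>. (a i \<omega>, b i \<omega>)) = distr M borel (\<lambda>\<omega>. (a 0 \<omega>, b 0 \<omega>))"
    and indK: "indep_set
           (sets (vimage_algebra (space M) K (count_space UNIV)))
           (sets (vimage_algebra (space M) (\<lambda>\<omega> i. (a i \<omega>, b i \<omega>)) (PiM UNIV (\<lambda>_. borel))))"
    and int9: "integrable M (\<lambda>\<omega>. det_nat (K \<omega>) (\<lambda>i j. a i \<omega> \<bullet> b j \<omega>))"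
    and int10: "\<And>j l. integrable M (\<lambda>\<omega>. \<Sum>i<K \<omega>. b i \<omega> $ j * a i \<omega> $ l)"
begin

lemma Sm: "(\<lambda>\<omega> i. (a i \<omega>, b i \<omega>)) \<in> measurable M (PiM UNIV (\<lambda>_. borel))"
  by (rule measurable_PiM_single'[where f="\<lambda>i \<omega>. (a i \<omega>, b i \<omega>)"]) (auto simp: Xm)

lemma am: "(\<lambda>\<omega>. a i \<omega>) \<in> borel_measurable M" and bm: "(\<lambda>\<omega>. b i \<omega>) \<in> borel_measurable M"
proof -
  have f: "(fst :: (real^'d) \<times> (real^'d) \<Rightarrow> real^'d) \<in> borel_measurable borel"
    by (intro borel_measurable_continuous_onI continuous_intros)
  have s: "(snd :: (real^'d) \<times> (real^'d) \<Rightarrow> real^'d) \<in> borel_measurable borel"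
    by (intro borel_measurable_continuous_onI continuous_intros)
  show "(\<lambda>\<omega>. a i \<omega>) \<in> borel_measurable M" using measurable_compose[OF Xm f] by simp
  show "(\<lambda>\<omega>. b i \<omega>) \<in> borel_measurable M" using measurable_compose[OF Xm s] by simp
qed

lemma pK: "prob {\<omega>\<in>space M. K \<omega> = k} = pmf (poisson_pmf rate) k"
proof -
  have "prob {\<omega>\<in>space M. K \<omega> = k} = measure (distr M (count_space UNIV) K) {k}"
    using Km by (subst measure_distr) (auto intro!: arg_cong[where f="measure M"])
  also have "\<dots> = pmf (poisson_pmf rate) k" by (simp add: Kd measure_pmf_single)
  finally show ?thesis .
qed

lemma idd_integrable:
  fixes h :: "(real^'d) \<times> (real^'d) \<Rightarrow> real"
  assumes h: "h \<in> borel_measurable borel"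
  shows "integrable M (\<lambda>\<omega>. h (a i \<omega>, b i \<omega>)) \<longleftrightarrow> integrable M (\<lambda>\<omega>. h (a 0 \<omega>, b 0 \<omega>))"
  using integrable_distr_eq[OF Xm[of i] h] integrable_distr_eq[OF Xm[of 0] h] idd[of i] by simp

lemma idd_integral:
  fixes h :: "(real^'d) \<times> (real^'d) \<Rightarrow> real"
  assumes h: "h \<in> borel_measurable borel"
  shows "expectation (\<lambda>\<omega>. h (a i \<omega>, b i \<omega>)) = expectation (\<lambda>\<omega>. h (a 0 \<omega>, b 0 \<omega>))"
  using integral_distr[OF Xm[of i] h] integral_distr[OF Xm[of 0] h] idd[of i] by simp

lemma hm: "(\<lambda>z::(real^'d) \<times> (real^'d). fst z $ l * snd z $ j) \<in> borel_measurable borel"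
  by (intro borel_measurable_continuous_onI continuous_intros)


lemma intC: "integrable M (\<lambda>\<omega>. a 0 \<omega> $ l * b 0 \<omega> $ j)"
proof -
  define Y where "Y = (\<lambda>\<omega>. b 0 \<omega> $ j * a 0 \<omega> $ l)"
  define g where "g = (\<lambda>s :: nat \<Rightarrow> (real^'d) \<times> (real^'d). \<bar>snd (s 0) $ j * fst (s 0) $ l\<bar>)"
  have c: "(\<lambda>z::(real^'d)\<times>(real^'d). \<bar>snd z $ j * fst z $ l\<bar>) \<in> borel_measurable borel"
    by (intro borel_measurable_continuous_onI continuous_intros)
  have gm: "g \<in> borel_measurable (PiM UNIV (\<lambda>_. borel))"
  proof -
    have "(\<lambda>s::nat \<Rightarrow> (real^'d)\<times>(real^'d). s 0) \<in> measurable (PiM UNIV (\<lambda>_. borel)) borel"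
      by (rule measurable_component_singleton) simp
    from measurable_compose[OF this c] show ?thesis unfolding g_def .
  qed
  have gS: "\<And>\<omega>. g (\<lambda>i. (a i \<omega>, b i \<omega>)) = \<bar>Y \<omega>\<bar>" by (simp add: g_def Y_def)
  have c2: "(\<lambda>z::(real^'d)\<times>(real^'d). snd z $ j * fst z $ l) \<in> borel_measurable borel"
    by (intro borel_measurable_continuous_onI continuous_intros)
  have Ym: "Y \<in> borel_measurable M"
    using measurable_compose[OF Xm[of 0] c2] by (simp add: Y_def)
  have iv: "indep_var borel (\<lambda>\<omega>. indicator {1} (K \<omega>) :: real) borel (\<lambda>\<omega>. g (\<lambda>i. (a i \<omega>, b i \<omega>)))"
    by (rule indep_var_KS[OF indK Km Sm gm])
  have iv2: "indep_var borel (ennreal \<circ> (\<lambda>\<omega>. indicator {1} (K \<omega>) :: real)) borel (ennreal \<circ> (\<lambda>\<omega>. g (\<lambda>i. (a i \<omega>, b i \<omega>))))"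
    by (rule indep_var_compose[OF iv measurable_ennreal measurable_ennreal])
  define Z where "Z = case_bool (\<lambda>\<omega>. ennreal (indicator {1} (K \<omega>) :: real)) (\<lambda>\<omega>. ennreal \<bar>Y \<omega>\<bar>)"
  have indZ: "indep_vars (\<lambda>_. borel) Z UNIV"
  proof -
    have "(\<lambda>_::bool. borel :: ennreal measure) = case_bool borel borel" by (rule ext) (simp split: bool.split)
    moreover have "Z = case_bool (ennreal \<circ> (\<lambda>\<omega>. indicator {1} (K \<omega>) :: real)) (ennreal \<circ> (\<lambda>\<omega>. g (\<lambda>i. (a i \<omega>, b i \<omega>))))"
      by (simp add: Z_def comp_def gS)
    ultimately show ?thesis using iv2 unfolding indep_var_def by simp
  qed
  have "(\<integral>\<^sup>+\<omega>. (\<Prod>i\<in>UNIV. Z i \<omega>) \<partial>M) = (\<Prod>i\<in>UNIV. \<integral>\<^sup>+\<omega>. Z i \<omega> \<partial>M)"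
    by (rule indep_vars_nn_integral[OF _ indZ]) auto
  then have prodeq: "(\<integral>\<^sup>+\<omega>. ennreal (indicator {1} (K \<omega>)) * ennreal \<bar>Y \<omega>\<bar> \<partial>M)
      = (\<integral>\<^sup>+\<omega>. ennreal (indicator {1} (K \<omega>)) \<partial>M) * (\<integral>\<^sup>+\<omega>. ennreal \<bar>Y \<omega>\<bar> \<partial>M)"
    by (simp add: Z_def UNIV_bool mult_ac)
  have lhs_fin: "(\<integral>\<^sup>+\<omega>. ennreal (indicator {1} (K \<omega>)) * ennreal \<bar>Y \<omega>\<bar> \<partial>M) < \<infinity>"
  proof -
    have sets1: "K -` {1} \<inter> space M \<in> sets M" by (rule measurable_sets[OF Km]) simp
    have int: "integrable M (\<lambda>\<omega>. indicator (K -` {1} \<inter> space M) \<omega> *\<^sub>R (\<Sum>i<K \<omega>. b i \<omega> $ j * a i \<omega> $ l))"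
      by (rule integrable_mult_indicator[OF sets1 int10])
    then have "(\<integral>\<^sup>+\<omega>. norm (indicator (K -` {1} \<inter> space M) \<omega> *\<^sub>R (\<Sum>i<K \<omega>. b i \<omega> $ j * a i \<omega> $ l)) \<partial>M) < \<infinity>"
      unfolding integrable_iff_bounded by blast
    moreover have "(\<integral>\<^sup>+\<omega>. norm (indicator (K -` {1} \<inter> space M) \<omega> *\<^sub>R (\<Sum>i<K \<omega>. b i \<omega> $ j * a i \<omega> $ l)) \<partial>M)
        = (\<integral>\<^sup>+\<omega>. ennreal (indicator {1} (K \<omega>)) * ennreal \<bar>Y \<omega>\<bar> \<partial>M)"
      by (rule nn_integral_cong) (auto simp: indicator_def Y_def)
    ultimately show ?thesis by simp
  qed
  have p1: "(\<integral>\<^sup>+\<omega>. ennreal (indicator {1} (K \<omega>) :: real) \<partial>M) = ennreal (pmf (poisson_pmf rate) 1)"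
  proof -
    have sets1: "{\<omega>\<in>space M. K \<omega> = 1} \<in> sets M" using Km by measurable
    have "(\<integral>\<^sup>+\<omega>. ennreal (indicator {1} (K \<omega>) :: real) \<partial>M) = (\<integral>\<^sup>+\<omega>. indicator {\<omega>\<in>space M. K \<omega> = 1} \<omega> \<partial>M)"
      by (rule nn_integral_cong) (auto simp: indicator_def)
    also have "\<dots> = emeasure M {\<omega>\<in>space M. K \<omega> = 1}" using sets1 by simp
    also have "\<dots> = ennreal (prob {\<omega>\<in>space M. K \<omega> = 1})" by (simp add: emeasure_eq_measure)
    also have "\<dots> = ennreal (pmf (poisson_pmf rate) 1)" by (simp add: pK)
    finally show ?thesis .
  qed
  have pos: "pmf (poisson_pmf rate) 1 > 0" using rate by simp
  have "(\<integral>\<^sup>+\<omega>. ennreal \<bar>Y \<omega>\<bar> \<partial>M) < \<infinity>"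
    using lhs_fin pos unfolding prodeq p1 by (auto simp: ennreal_mult_less_top)
  then have "integrable M Y" by (intro integrableI_bounded Ym) simp
  moreover have "(\<lambda>\<omega>. a 0 \<omega> $ l * b 0 \<omega> $ j) = Y" by (auto simp: Y_def)
  ultimately show ?thesis by simp
qed


definition Cm :: "'d \<Rightarrow> 'd \<Rightarrow> real" where
  "Cm l j = expectation (\<lambda>\<omega>. a 0 \<omega> $ l * b 0 \<omega> $ j)"

lemma prod_exp:
  fixes f g :: "nat \<Rightarrow> 'd"
  shows "integrable M (\<lambda>\<omega>. \<Prod>i<k. a i \<omega> $ f i * b i \<omega> $ g i)"
    and "expectation (\<lambda>\<omega>. \<Prod>i<k. a i \<omega> $ f i * b i \<omega> $ g i) = (\<Prod>i<k. Cm (f i) (g i))"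
proof -
  define Y where "Y = (\<lambda>i (z::(real^'d)\<times>(real^'d)). fst z $ f i * snd z $ g i)"
  have Ym: "\<And>i. Y i \<in> borel_measurable borel" unfolding Y_def by (rule hm)
  have iv: "indep_vars (\<lambda>_. borel) (\<lambda>i \<omega>. Y i (a i \<omega>, b i \<omega>)) UNIV"
    by (rule indep_vars_compose2[OF indX]) (simp add: Ym)
  then have iv': "indep_vars (\<lambda>_. borel) (\<lambda>i \<omega>. Y i (a i \<omega>, b i \<omega>)) {..<k}"
    by (rule indep_vars_subset) simp
  have int: "integrable M (\<lambda>\<omega>. Y i (a i \<omega>, b i \<omega>))" for i
    using idd_integrable[OF Ym, of i] intC[of "f i" "g i"] by (simp add: Y_def)
  have ex: "expectation (\<lambda>\<omega>. a i \<omega> $ f i * b i \<omega> $ g i) = Cm (f i) (g i)" for i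
    using idd_integral[OF Ym, of i] by (simp add: Y_def Cm_def)
  have "integrable M (\<lambda>\<omega>. \<Prod>i<k. Y i (a i \<omega>, b i \<omega>))"
    by (rule indep_vars_integrable[OF _ iv' int]) simp
  then show "integrable M (\<lambda>\<omega>. \<Prod>i<k. a i \<omega> $ f i * b i \<omega> $ g i)" by (simp add: Y_def)
  have "expectation (\<lambda>\<omega>. \<Prod>i<k. Y i (a i \<omega>, b i \<omega>)) = (\<Prod>i<k. expectation (\<lambda>\<omega>. Y i (a i \<omega>, b i \<omega>)))"
    by (rule indep_vars_lebesgue_integral[OF _ iv' int]) simp
  then show "expectation (\<lambda>\<omega>. \<Prod>i<k. a i \<omega> $ f i * b i \<omega> $ g i) = (\<Prod>i<k. Cm (f i) (g i))"
    by (simp add: ex Y_def)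
qed

lemma det_expand:
  "det_nat k (\<lambda>i j. a i \<omega> \<bullet> b j \<omega>) =
   (\<Sum>p | p permutes {..<k}. of_int (sign p) *
      (\<Sum>f\<in>{..<k} \<rightarrow>\<^sub>E (UNIV::'d set). \<Prod>i<k. a i \<omega> $ f i * b i \<omega> $ f (inv p i)))"
  unfolding det_nat_def
proof (rule sum.cong[OF refl])
  fix p assume "p \<in> {p. p permutes {..<k}}"
  then have p: "p permutes {..<k}" by simp
  have "(\<Prod>i<k. a i \<omega> \<bullet> b (p i) \<omega>) = (\<Prod>i<k. \<Sum>l\<in>(UNIV::'d set). a i \<omega> $ l * b (p i) \<omega> $ l)"
    by (simp add: inner_vec_def)
  also have "\<dots> = (\<Sum>f\<in>{..<k} \<rightarrow>\<^sub>E (UNIV::'d set). \<Prod>i<k. a i \<omega> $ f i * b (p i) \<omega> $ f i)"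
    by (rule prod_sum_PiE) simp_all
  also have "\<dots> = (\<Sum>f\<in>{..<k} \<rightarrow>\<^sub>E (UNIV::'d set). \<Prod>i<k. a i \<omega> $ f i * b i \<omega> $ f (inv p i))"
  proof (rule sum.cong[OF refl])
    fix f :: "nat \<Rightarrow> 'd"
    have "(\<Prod>i<k. b i \<omega> $ f (inv p i)) = prod ((\<lambda>i. b i \<omega> $ f (inv p i)) \<circ> p) {..<k}"
      by (rule prod.permute[OF p])
    also have "\<dots> = (\<Prod>i<k. b (p i) \<omega> $ f i)"
      by (simp add: comp_def permutes_inverses(2)[OF p])
    finally have "(\<Prod>i<k. b (p i) \<omega> $ f i) = (\<Prod>i<k. b i \<omega> $ f (inv p i))" ..
    then show "(\<Prod>i<k. a i \<omega> $ f i * b (p i) \<omega> $ f i) = (\<Prod>i<k. a i \<omega> $ f i * b i \<omega> $ f (inv p i))"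
      by (simp add: prod.distrib)
  qed
  finally show "of_int (sign p) * (\<Prod>i<k. a i \<omega> \<bullet> b (p i) \<omega>) =
      of_int (sign p) * (\<Sum>f\<in>{..<k} \<rightarrow>\<^sub>E (UNIV::'d set). \<Prod>i<k. a i \<omega> $ f i * b i \<omega> $ f (inv p i))"
    by simp
qed


lemma det_exp:
  shows "integrable M (\<lambda>\<omega>. det_nat k (\<lambda>i j. a i \<omega> \<bullet> b j \<omega>))"
    and "expectation (\<lambda>\<omega>. det_nat k (\<lambda>i j. a i \<omega> \<bullet> b j \<omega>)) =
      (\<Sum>f\<in>{..<k} \<rightarrow>\<^sub>E (UNIV::'d set). \<Sum>p | p permutes {..<k}. of_int (sign p) * (\<Prod>i<k. Cm (f i) (f (p i))))"
proof -
  have eq: "(\<lambda>\<omega>. det_nat k (\<lambda>i j. a i \<omega> \<bullet> b j \<omega>)) = (\<lambda>\<omega>.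
     \<Sum>p | p permutes {..<k}. of_int (sign p) *
      (\<Sum>f\<in>{..<k} \<rightarrow>\<^sub>E (UNIV::'d set). \<Prod>i<k. a i \<omega> $ f i * b i \<omega> $ f (inv p i)))"
    by (rule ext) (rule det_expand)
  have i1: "integrable M (\<lambda>\<omega>. \<Prod>i<k. a i \<omega> $ f i * b i \<omega> $ f (inv p i))" for f :: "nat \<Rightarrow> 'd" and p
    using prod_exp(1)[where k=k and f=f and g="\<lambda>i. f (inv p i)"] .
  have i2: "expectation (\<lambda>\<omega>. \<Prod>i<k. a i \<omega> $ f i * b i \<omega> $ f (inv p i)) = (\<Prod>i<k. Cm (f i) (f (inv p i)))"
    for f :: "nat \<Rightarrow> 'd" and p
    using prod_exp(2)[where k=k and f=f and g="\<lambda>i. f (inv p i)"] .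
  show "integrable M (\<lambda>\<omega>. det_nat k (\<lambda>i j. a i \<omega> \<bullet> b j \<omega>))"
    unfolding eq by (intro Bochner_Integration.integrable_sum integrable_mult_right i1)
  have "expectation (\<lambda>\<omega>. det_nat k (\<lambda>i j. a i \<omega> \<bullet> b j \<omega>)) =
     (\<Sum>p | p permutes {..<k}. of_int (sign p) *
      (\<Sum>f\<in>{..<k} \<rightarrow>\<^sub>E (UNIV::'d set). \<Prod>i<k. Cm (f i) (f (inv p i))))"
    unfolding eq
    by (simp add: Bochner_Integration.integral_sum integrable_mult_right i1 Bochner_Integration.integrable_sum
        i2)
  also have "\<dots> = (\<Sum>f\<in>{..<k} \<rightarrow>\<^sub>E (UNIV::'d set). \<Sum>p | p permutes {..<k}.
      of_int (sign p) * (\<Prod>i<k. Cm (f i) (f (inv p i))))"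
    by (simp add: sum_distrib_left sum.swap[of _ "{p. p permutes {..<k}}"])
  also have "\<dots> = (\<Sum>f\<in>{..<k} \<rightarrow>\<^sub>E (UNIV::'d set). \<Sum>p | p permutes {..<k}.
      of_int (sign p) * (\<Prod>i<k. Cm (f i) (f (p i))))"
  proof (rule sum.cong[OF refl])
    fix f :: "nat \<Rightarrow> 'd"
    have "(\<Sum>p | p permutes {..<k}. of_int (sign p) * (\<Prod>i<k. Cm (f i) (f (inv p i))))
       = (\<Sum>p | p permutes {..<k}. of_int (sign (inv p)) * (\<Prod>i<k. Cm (f i) (f (inv (inv p) i))))"
      by (rule sum_permutations_inverse)
    also have "\<dots> = (\<Sum>p | p permutes {..<k}. of_int (sign p) * (\<Prod>i<k. Cm (f i) (f (p i))))"
    proof (rule sum.cong[OF refl])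
      fix p assume "p \<in> {p. p permutes {..<k}}"
      then have p: "p permutes {..<k}" by simp
      have "permutation p" using permutes_imp_permutation[OF finite_lessThan p] .
      then show "of_int (sign (inv p)) * (\<Prod>i<k. Cm (f i) (f (inv (inv p) i))) =
          of_int (sign p) * (\<Prod>i<k. Cm (f i) (f (p i)))"
        by (simp add: sign_inverse inv_inv_eq[OF permutes_bij[OF p]])
    qed
    finally show "(\<Sum>p | p permutes {..<k}. of_int (sign p) * (\<Prod>i<k. Cm (f i) (f (inv p i))))
       = (\<Sum>p | p permutes {..<k}. of_int (sign p) * (\<Prod>i<k. Cm (f i) (f (p i))))" .
  qed
  finally show "expectation (\<lambda>\<omega>. det_nat k (\<lambda>i j. a i \<omega> \<bullet> b j \<omega>)) =
      (\<Sum>f\<in>{..<k} \<rightarrow>\<^sub>E (UNIV::'d set). \<Sum>p | p permutes {..<k}. of_int (sign p) * (\<Prod>i<k. Cm (f i) (f (p i))))" .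
qed


lemma fst_comp_meas: "(\<lambda>s::nat \<Rightarrow> (real^'d)\<times>(real^'d). fst (s i)) \<in> borel_measurable (PiM UNIV (\<lambda>_. borel))"
proof -
  have f: "(fst :: (real^'d) \<times> (real^'d) \<Rightarrow> real^'d) \<in> borel_measurable borel"
    by (intro borel_measurable_continuous_onI continuous_intros)
  have "(\<lambda>s::nat \<Rightarrow> (real^'d)\<times>(real^'d). s i) \<in> measurable (PiM UNIV (\<lambda>_. borel)) borel"
    by (rule measurable_component_singleton) simp
  from measurable_compose[OF this f] show ?thesis .
qed

lemma snd_comp_meas: "(\<lambda>s::nat \<Rightarrow> (real^'d)\<times>(real^'d). snd (s i)) \<in> borel_measurable (PiM UNIV (\<lambda>_. borel))"
proof -
  have f: "(snd :: (real^'d) \<times> (real^'d) \<Rightarrow> real^'d) \<in> borel_measurable borel"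
    by (intro borel_measurable_continuous_onI continuous_intros)
  have "(\<lambda>s::nat \<Rightarrow> (real^'d)\<times>(real^'d). s i) \<in> measurable (PiM UNIV (\<lambda>_. borel)) borel"
    by (rule measurable_component_singleton) simp
  from measurable_compose[OF this f] show ?thesis .
qed

lemma det_K:
  "expectation (\<lambda>\<omega>. det_nat (K \<omega>) (\<lambda>i j. a i \<omega> \<bullet> b j \<omega>))
     = exp (- rate) * det (mat 1 + (\<chi> i j. rate * Cm i j) :: real^'d^'d)"
proof -
  define F where "F = (\<lambda>k \<omega>. det_nat k (\<lambda>i j. a i \<omega> \<bullet> b j \<omega>))"
  define h where "h = (\<lambda>k (s::nat \<Rightarrow> (real^'d)\<times>(real^'d)). det_nat k (\<lambda>i j. fst (s i) \<bullet> snd (s j)))"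
  define G where "G = (\<lambda>k::nat. \<Sum>f\<in>{..<k} \<rightarrow>\<^sub>E (UNIV::'d set). \<Sum>p | p permutes {..<k}. of_int (sign p) * (\<Prod>i<k. Cm (f i) (f (p i))))"
  note [measurable] = fst_comp_meas snd_comp_meas
  have hm: "h k \<in> borel_measurable (PiM UNIV (\<lambda>_. borel))" for k
    unfolding h_def det_nat_def by measurable
  have Fh: "F k \<omega> = h k (\<lambda>i. (a i \<omega>, b i \<omega>))" for k \<omega> by (simp add: F_def h_def)
  have Fm: "F k \<in> borel_measurable M" for k
    using det_exp(1)[of k] unfolding F_def by (rule borel_measurable_integrable)
  have int9': "integrable M (\<lambda>\<omega>. F (K \<omega>) \<omega>)" using int9 by (simp add: F_def)
  have s1: "(\<lambda>k. expectation (\<lambda>\<omega>. indicator {\<omega>\<in>space M. K \<omega> = k} \<omega> * F k \<omega>)) sums expectation (\<lambda>\<omega>. F (K \<omega>) \<omega>)"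
    by (rule sums_decomp[OF Km Fm int9'])
  have trm: "expectation (\<lambda>\<omega>. indicator {\<omega>\<in>space M. K \<omega> = k} \<omega> * F k \<omega>) = exp (- rate) * (rate ^ k / fact k * G k)" for k
  proof -
    have "expectation (\<lambda>\<omega>. indicator {\<omega>\<in>space M. K \<omega> = k} \<omega> * F k \<omega>)
        = expectation (\<lambda>\<omega>. indicator {\<omega>\<in>space M. K \<omega> = k} \<omega> * h k (\<lambda>i. (a i \<omega>, b i \<omega>)))"
      by (simp add: Fh)
    also have "\<dots> = prob {\<omega>\<in>space M. K \<omega> = k} * expectation (\<lambda>\<omega>. h k (\<lambda>i. (a i \<omega>, b i \<omega>)))"
    proof (rule indep_mult[OF indK Km Sm hm])
      show "integrable M (\<lambda>\<omega>. h k (\<lambda>i. (a i \<omega>, b i \<omega>)))" using det_exp(1)[of k] by (simp add: h_def)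
    qed
    also have "expectation (\<lambda>\<omega>. h k (\<lambda>i. (a i \<omega>, b i \<omega>))) = G k"
      using det_exp(2)[of k] by (simp add: h_def G_def)
    finally show ?thesis using rate by (simp add: pK)
  qed
  have s2: "(\<lambda>k. exp (- rate) * (rate ^ k / fact k * G k)) sums (exp (- rate) * det (mat 1 + (\<chi> i j. rate * Cm i j) :: real^'d^'d))"
    unfolding G_def by (rule sums_mult[OF series_det])
  have s1': "(\<lambda>k. exp (- rate) * (rate ^ k / fact k * G k)) sums expectation (\<lambda>\<omega>. F (K \<omega>) \<omega>)"
    using s1 unfolding trm .
  from s1' s2 have "expectation (\<lambda>\<omega>. F (K \<omega>) \<omega>) = exp (- rate) * det (mat 1 + (\<chi> i j. rate * Cm i j) :: real^'d^'d)"
    by (rule sums_unique2)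
  then show ?thesis by (simp add: F_def)
qed


lemma pois_mean: "(\<lambda>k. pmf (poisson_pmf rate) k * real k) sums rate"
proof -
  define f where "f = (\<lambda>k. pmf (poisson_pmf rate) k * real k)"
  have "(\<lambda>n. rate * exp (- rate) * (rate ^ n /\<^sub>R fact n)) sums (rate * exp (- rate) * exp rate)"
    by (rule sums_mult[OF exp_converges])
  moreover have "rate * exp (- rate) * exp rate = rate" by (simp add: exp_minus field_simps)
  moreover have "f (Suc n) = rate * exp (- rate) * (rate ^ n /\<^sub>R fact n)" for n
  proof -
    have aux: "x / (c * d) * e * c = x / d * e" if "c \<noteq> 0" "d \<noteq> 0" for x c d e :: real
      using that by (simp add: field_simps)
    have "f (Suc n) = (rate * rate ^ n) / (real (Suc n) * fact n) * exp (- rate) * real (Suc n)"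
      using rate unfolding f_def by (simp only: pmf_poisson fact_Suc power_Suc)
    also have "\<dots> = (rate * rate ^ n) / fact n * exp (- rate)"
      by (rule aux) simp_all
    finally show ?thesis by (simp add: divide_inverse_commute)
  qed
  ultimately have "(\<lambda>n. f (Suc n)) sums rate" by simp
  then have "f sums (rate + f 0)" by (simp add: sums_Suc_iff)
  then show ?thesis by (simp add: f_def)
qed

lemma comp_cont_meas:
  fixes g :: "(real^'d)\<times>(real^'d) \<Rightarrow> real"
  assumes "continuous_on UNIV g"
  shows "(\<lambda>s::nat \<Rightarrow> (real^'d)\<times>(real^'d). g (s i)) \<in> borel_measurable (PiM UNIV (\<lambda>_. borel))"
proof -
  have f: "g \<in> borel_measurable borel" using assms by (rule borel_measurable_continuous_onI)
  have "(\<lambda>s::nat \<Rightarrow> (real^'d)\<times>(real^'d). s i) \<in> measurable (PiM UNIV (\<lambda>_. borel)) borel"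
    by (rule measurable_component_singleton) simp
  from measurable_compose[OF this f] show ?thesis .
qed

lemma sumK: "expectation (\<lambda>\<omega>. \<Sum>i<K \<omega>. b i \<omega> $ j * a i \<omega> $ l) = rate * Cm l j"
proof -
  define F where "F = (\<lambda>k \<omega>. \<Sum>i<k. b i \<omega> $ j * a i \<omega> $ l)"
  define h where "h = (\<lambda>k (s::nat \<Rightarrow> (real^'d)\<times>(real^'d)). \<Sum>i<k. snd (s i) $ j * fst (s i) $ l)"
  have cg: "continuous_on UNIV (\<lambda>z::(real^'d)\<times>(real^'d). snd z $ j * fst z $ l)"
    by (intro continuous_intros)
  have hkm: "h k \<in> borel_measurable (PiM UNIV (\<lambda>_. borel))" for k
    unfolding h_def by (intro borel_measurable_sum comp_cont_meas[OF cg])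
  have Fh: "F k \<omega> = h k (\<lambda>i. (a i \<omega>, b i \<omega>))" for k \<omega> by (simp add: F_def h_def)
  have inti': "integrable M (\<lambda>\<omega>. a i \<omega> $ l * b i \<omega> $ j)" for i
    using idd_integrable[OF hm[of l j], of i] intC[of l j] by simp
  have inti: "integrable M (\<lambda>\<omega>. b i \<omega> $ j * a i \<omega> $ l)" for i
    using inti'[of i] by (simp add: mult.commute)
  have exi: "expectation (\<lambda>\<omega>. b i \<omega> $ j * a i \<omega> $ l) = Cm l j" for i
    using idd_integral[OF hm[of l j], of i] by (simp add: mult.commute Cm_def)
  have intF: "integrable M (F k)" for k
    unfolding F_def by (intro Bochner_Integration.integrable_sum inti)
  have exF: "expectation (F k) = real k * Cm l j" for k
    unfolding F_def by (simp add: Bochner_Integration.integral_sum inti exi)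
  have Fm: "F k \<in> borel_measurable M" for k using intF[of k] by (rule borel_measurable_integrable)
  have int10': "integrable M (\<lambda>\<omega>. F (K \<omega>) \<omega>)" using int10[of j l] by (simp add: F_def)
  have s1: "(\<lambda>k. expectation (\<lambda>\<omega>. indicator {\<omega>\<in>space M. K \<omega> = k} \<omega> * F k \<omega>)) sums expectation (\<lambda>\<omega>. F (K \<omega>) \<omega>)"
    by (rule sums_decomp[OF Km Fm int10'])
  have trm: "expectation (\<lambda>\<omega>. indicator {\<omega>\<in>space M. K \<omega> = k} \<omega> * F k \<omega>) = Cm l j * (pmf (poisson_pmf rate) k * real k)" for k
  proof -
    have "expectation (\<lambda>\<omega>. indicator {\<omega>\<in>space M. K \<omega> = k} \<omega> * F k \<omega>)
        = expectation (\<lambda>\<omega>. indicator {\<omega>\<in>space M. K \<omega> = k} \<omega> * h k (\<lambda>i. (a i \<omega>, b i \<omega>)))"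
      by (simp add: Fh)
    also have "\<dots> = prob {\<omega>\<in>space M. K \<omega> = k} * expectation (\<lambda>\<omega>. h k (\<lambda>i. (a i \<omega>, b i \<omega>)))"
    proof (rule indep_mult[OF indK Km Sm hkm])
      show "integrable M (\<lambda>\<omega>. h k (\<lambda>i. (a i \<omega>, b i \<omega>)))" using intF[of k] by (simp add: h_def F_def)
    qed
    also have "expectation (\<lambda>\<omega>. h k (\<lambda>i. (a i \<omega>, b i \<omega>))) = real k * Cm l j"
      using exF[of k] by (simp add: h_def F_def)
    finally show ?thesis by (simp add: pK)
  qed
  have s2: "(\<lambda>k. Cm l j * (pmf (poisson_pmf rate) k * real k)) sums (Cm l j * rate)"
    by (rule sums_mult[OF pois_mean])
  have s1': "(\<lambda>k. Cm l j * (pmf (poisson_pmf rate) k * real k)) sums expectation (\<lambda>\<omega>. F (K \<omega>) \<omega>)"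
    using s1 unfolding trm .
  from s1' s2 have "expectation (\<lambda>\<omega>. F (K \<omega>) \<omega>) = Cm l j * rate" by (rule sums_unique2)
  then show ?thesis by (simp add: F_def mult.commute)
qed

lemma meanK: "expectation (\<lambda>\<omega>. real (K \<omega>)) = rate"
proof -
  define f where "f = (\<lambda>n \<omega>. \<Sum>k<n. indicator {\<omega>\<in>space M. K \<omega> = k} \<omega> * real k)"
  have sets: "{\<omega>\<in>space M. K \<omega> = k} \<in> sets M" for k using Km by measurable
  have intk: "integrable M (\<lambda>\<omega>. indicator {\<omega>\<in>space M. K \<omega> = k} \<omega> * real k)" for k
    using sets[of k] by (intro integrable_mult_left) (simp add: integrable_indicator_iff less_top[symmetric])
  have f_eq: "f n \<omega> = (if K \<omega> < n then real (K \<omega>) else 0)" if "\<omega> \<in> space M" for n \<omega>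
  proof -
    have "f n \<omega> = (\<Sum>k<n. if K \<omega> = k then real k else 0)"
      unfolding f_def using that by (intro sum.cong) (auto simp: indicator_def)
    also have "\<dots> = (if K \<omega> < n then real (K \<omega>) else 0)"
      by (simp add: sum.delta)
    finally show ?thesis .
  qed
  have i: "integrable M (f n)" for n
    unfolding f_def by (intro Bochner_Integration.integrable_sum intk)
  have mono: "AE \<omega> in M. mono (\<lambda>n. f n \<omega>)"
    by (rule AE_I2) (auto simp: mono_def f_eq)
  have pos: "AE \<omega> in M. 0 \<le> f n \<omega>" for n
    by (rule AE_I2) (simp add: f_eq)
  have lim: "AE \<omega> in M. (\<lambda>n. f n \<omega>) \<longlonglongrightarrow> real (K \<omega>)"
  proof (rule AE_I2)
    fix \<omega> assume \<omega>: "\<omega> \<in> space M"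
    have "eventually (\<lambda>n. f n \<omega> = real (K \<omega>)) sequentially"
      unfolding eventually_sequentially using \<omega> by (intro exI[of _ "Suc (K \<omega>)"]) (auto simp: f_eq)
    then show "(\<lambda>n. f n \<omega>) \<longlonglongrightarrow> real (K \<omega>)" by (rule tendsto_eventually)
  qed
  have ef: "expectation (f n) = (\<Sum>k<n. pmf (poisson_pmf rate) k * real k)" for n
  proof -
    have "expectation (f n) = (\<Sum>k<n. expectation (\<lambda>\<omega>. indicator {\<omega>\<in>space M. K \<omega> = k} \<omega> * real k))"
      unfolding f_def
      using Bochner_Integration.integral_sum[where I="{..<n}" and f="\<lambda>k \<omega>. indicator {\<omega>\<in>space M. K \<omega> = k} \<omega> * real k"] intk
      by simp
    also have "\<dots> = (\<Sum>k<n. pmf (poisson_pmf rate) k * real k)"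
    proof (rule sum.cong[OF refl])
      fix k
      have "expectation (\<lambda>\<omega>. indicator {\<omega>\<in>space M. K \<omega> = k} \<omega> * real k)
          = expectation (\<lambda>\<omega>. indicator {\<omega>\<in>space M. K \<omega> = k} \<omega> :: real) * real k"
        by (rule integral_mult_left_zero)
      also have "\<dots> = prob {\<omega>\<in>space M. K \<omega> = k} * real k" using sets[of k] by simp
      finally show "expectation (\<lambda>\<omega>. indicator {\<omega>\<in>space M. K \<omega> = k} \<omega> * real k) = pmf (poisson_pmf rate) k * real k"
        by (simp add: pK)
    qed
    finally show ?thesis .
  qed
  have ilim: "(\<lambda>n. expectation (f n)) \<longlonglongrightarrow> rate"
    using pois_mean unfolding sums_def ef .
  have u: "(\<lambda>\<omega>. real (K \<omega>)) \<in> borel_measurable M"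
    by (rule measurable_compose[OF Km]) simp
  show ?thesis by (rule integral_monotone_convergence_nonneg(2)[OF i mono pos lim ilim u])
qed

end




lemma det_I_plus_T: "det (mat 1 + transpose X) = det (mat 1 + (X::real^'n^'n))"
proof -
  have "transpose (mat 1 + X) = mat 1 + transpose X"
    by (simp add: transpose_def vec_eq_iff mat_def)
  then show ?thesis by (metis det_transpose)
qed

theorem lemma6:
  fixes M :: "'w measure" and K :: "'w \<Rightarrow> nat" and rate :: real
    and a b :: "nat \<Rightarrow> 'w \<Rightarrow> real ^ 'd"
  assumes "prob_space M"
    and "rate > 0"
    and "K \<in> measurable M (count_space UNIV)"
    and "distr M (count_space UNIV) K = measure_pmf (poisson_pmf rate)"
    and "\<And>i. (\<lambda>\<omega>. (a i \<omega>, b i \<omega>)) \<in> borel_measurable M"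
    and "prob_space.indep_vars M (\<lambda>_. borel) (\<lambda>i \<omega>. (a i \<omega>, b i \<omega>)) UNIV"
    and "\<And>i. distr M borel (\<lambda>\<omega>. (a i \<omega>, b i \<omega>)) = distr M borel (\<lambda>\<omega>. (a 0 \<omega>, b 0 \<omega>))"
    and "prob_space.indep_set M
           (sets (vimage_algebra (space M) K (count_space UNIV)))
           (sets (vimage_algebra (space M) (\<lambda>\<omega> i. (a i \<omega>, b i \<omega>)) (PiM UNIV (\<lambda>_. borel))))"
    and "integrable M (\<lambda>\<omega>. det_nat (K \<omega>) (\<lambda>i j. a i \<omega> \<bullet> b j \<omega>))"
    and "\<And>j l. integrable M (\<lambda>\<omega>. \<Sum>i<K \<omega>. b i \<omega> $ j * a i \<omega> $ l)"
  shows "prob_space.expectation M (\<lambda>\<omega>. det_nat (K \<omega>) (\<lambda>i j. a i \<omega> \<bullet> b j \<omega>))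
       = exp (- prob_space.expectation M (\<lambda>\<omega>. real (K \<omega>)))
         * det (mat 1 + (\<chi> j l. prob_space.expectation M
                              (\<lambda>\<omega>. \<Sum>i<K \<omega>. b i \<omega> $ j * a i \<omega> $ l)) :: real ^ 'd ^ 'd)"
proof -
  have L: "lem6 M K rate a b"
    unfolding lem6_def lem6_axioms_def using assms by blast
  interpret lem6 M K rate a b by (rule L)
  have T: "(\<chi> j l. expectation (\<lambda>\<omega>. \<Sum>i<K \<omega>. b i \<omega> $ j * a i \<omega> $ l)) = transpose (\<chi> i j. rate * Cm i j)"
    by (simp add: sumK transpose_def vec_eq_iff)
  show ?thesis
    unfolding T det_I_plus_T det_K meanK ..
qed


end
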